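(* The function $t\mapsto\dot H(t)/\dot I(t)$ is decreasing on $(0,\infty)$.
   Context: $\dot H(t)=\frac{1}{\ln2}\big(te^{-t}-(1-e^{-t})\ln(1-e^{-t})\big)$ and $\dot I(t)=\frac{t^2}{e^t-1}$ for $t>0$ (the entropy in bits and the normalized Fisher information $\lambda^2 I$ of the indicator that a $\mathrm{Poisson}(t)$ variable, $t=p\lambda$, is nonzero). *)

theory Defs
  imports Complex_Main
begin

text \<open>Entropy (in bits) of the indicator that a Poisson(t) variable is nonzero.\<close>
definition Hdot :: "real \<Rightarrow> real" where
  "Hdot t = (1 / ln 2) * (t * exp (- t) - (1 - exp (- t)) * ln (1 - exp (- t)))"

definition Idot :: "real \<Rightarrow> real" where
  "Idot t = t\<^sup>2 / (exp t - 1)"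

end

theory Submission
  imports Defs
begin

lemma p_dec:
  fixes s t :: real
  assumes "0 < s" "s < t"
  shows "(1 - exp (-t)) / t < (1 - exp (-s)) / s"
proof -
  have "\<exists>y. DERIV (\<lambda>x. (1 - exp (-x)) / x) x :> y \<and> y < 0" if "s \<le> x" "x \<le> t" for x
  proof -
    have x0: "x > 0" using that assms by linarith
    have D: "DERIV (\<lambda>x. (1 - exp (-x)) / x) x :> ((exp (-x)) * x - (1 - exp (-x))) / x^2"
      using x0 by (auto intro!: derivative_eq_intros simp: power2_eq_square)
    have "exp (x/2) \<ge> 1 + x/2" by (rule exp_ge_add_one_self)
    hence "exp (x/2) * exp (x/2) \<ge> (1 + x/2) * (1 + x/2)" using x0 by (intro mult_mono) auto
    hence "exp x \<ge> (1 + x/2) * (1 + x/2)" by (simp flip: exp_add)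
    moreover have "(1 + x/2) * (1 + x/2) > 1 + x" using x0 by (simp add: algebra_simps)
    ultimately have "exp x > 1 + x" by linarith
    then have "exp (-x) * (1 + x) < 1"
      by (metis exp_gt_zero exp_minus_inverse mult.commute mult_strict_left_mono)
    then have "(exp (-x)) * x - (1 - exp (-x)) < 0" by (simp add: algebra_simps)
    then have "((exp (-x)) * x - (1 - exp (-x))) / x^2 < 0" using x0 by (simp add: divide_neg_pos)
    with D show ?thesis by blast
  qed
  from DERIV_neg_imp_decreasing[OF assms(2) this] show ?thesis by simp
qed

lemma q_dec:
  fixes a b :: real
  assumes "0 < a" "a < b" "b < 1"
  shows "- ln b / (1 - b) < - ln a / (1 - a)"
proof -
  have "\<exists>y. DERIV (\<lambda>v. - ln v / (1 - v)) x :> y \<and> y < 0" if "a \<le> x" "x \<le> b" for x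
  proof -
    have x0: "x > 0" "x < 1" using that assms by linarith+
    have D: "DERIV (\<lambda>v. - ln v / (1 - v)) x :> ((- (1/x)) * (1 - x) - (- ln x) * (-1)) / (1 - x)^2"
      using x0 by (auto intro!: derivative_eq_intros simp: power2_eq_square divide_simps)
    have "ln (1 + (1/x - 1)) < 1/x - 1" using x0 by (intro ln_add_one_self_less_self) (auto simp: field_simps)
    hence "- ln x < 1/x - 1" using x0 by (simp add: ln_div)
    hence "(- (1/x)) * (1 - x) - (- ln x) * (-1) < 0" using x0 by (simp add: field_simps)
    then have "((- (1/x)) * (1 - x) - (- ln x) * (-1)) / (1 - x)^2 < 0" using x0 by (simp add: divide_neg_pos)
    with D show ?thesis by blast
  qed
  from DERIV_neg_imp_decreasing[OF assms(2) this] show ?thesis by simp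
qed

lemma ratio_eq:
  fixes t :: real
  assumes "t > 0"
  defines "v \<equiv> 1 - exp (-t)"
  shows "Hdot t / Idot t = (1 / ln 2) * (v / t + (v / t)^2 * (- ln v / (1 - v)))"
proof -
  have e: "exp (-t) < 1" using assms by simp
  have ep: "exp t > 1" using assms by simp
  have 1: "exp t - 1 = v / (1 - v)" unfolding v_def using ep
    by (simp add: exp_minus field_simps)
  have v1: "1 - v \<noteq> 0" unfolding v_def by simp
  have "Hdot t / Idot t = (1 / ln 2) * (t * (1 - v) - v * ln v) * (exp t - 1) / t^2"
    unfolding Hdot_def Idot_def v_def using assms ep by (simp add: field_simps)
  also have "\<dots> = (1 / ln 2) * (v / t + (v / t)^2 * (- ln v / (1 - v)))"
    unfolding 1 using assms v1 by (simp add: field_simps power2_eq_square)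
  finally show ?thesis .
qed

theorem mainTheorem10:
  shows "\<forall>s t. 0 < s \<longrightarrow> s < t \<longrightarrow> Hdot t / Idot t < Hdot s / Idot s"
proof (intro allI impI)
  fix s t :: real
  assume s: "0 < s" and st: "s < t"
  define vs where "vs = 1 - exp (-s)"
  define vt where "vt = 1 - exp (-t)"
  have vs0: "0 < vs" "vs < 1" unfolding vs_def using s by auto
  have vt0: "0 < vt" "vt < 1" unfolding vt_def using s st by auto
  have vst: "vs < vt" unfolding vs_def vt_def using st by simp
  have p: "vt / t < vs / s" unfolding vs_def vt_def using p_dec[OF s st] .
  have q: "- ln vt / (1 - vt) < - ln vs / (1 - vs)" using q_dec[OF vs0(1) vst vt0(2)] .
  have pt0: "0 < vt / t" using vt0 s st by simp
  have qt0: "0 < - ln vt / (1 - vt)" using vt0 ln_less_zero[of vt] by (simp add: divide_neg_pos)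
  have "(vt / t)^2 < (vs / s)^2" using p pt0 by (simp add: power_strict_mono)
  hence "(vt / t)^2 * (- ln vt / (1 - vt)) \<le> (vs / s)^2 * (- ln vs / (1 - vs))"
    using q qt0 by (intro mult_mono) auto
  hence "vt / t + (vt / t)^2 * (- ln vt / (1 - vt)) < vs / s + (vs / s)^2 * (- ln vs / (1 - vs))"
    using p by linarith
  moreover have "ln (2::real) > 0" by simp
  ultimately have "(1 / ln 2) * (vt / t + (vt / t)^2 * (- ln vt / (1 - vt)))
      < (1 / ln 2) * (vs / s + (vs / s)^2 * (- ln vs / (1 - vs)))"
    by (simp add: divide_strict_right_mono)
  then show "Hdot t / Idot t < Hdot s / Idot s"
    using ratio_eq[of s] ratio_eq[of t] s st unfolding vs_def vt_def by simp
qed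

end
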